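(* Let $X$ and $Y$ be Hausdorff uniform spaces and $f\colon X\to Y$ a function generating the uniform structure of $Y$. (1) If $f$ satisfies conditions GP1 and GP2, then $\widetilde f\colon GP(X,x_0)\to GP(Y,f(x_0))$ is a uniform equivalence for each $x_0\in X$. (2) If $X$ is joinable and $\widetilde f\colon GP(X,x_1)\to GP(Y,f(x_1))$ is a uniform equivalence for some $x_1\in X$, then $f$ satisfies GP1 and GP2.
   Context: $f(E)=\{(f(x),f(y)):(x,y)\in E\}$; a surjection $f$ generates the uniform structure of its range if the sets $f(E)$ form a base of it. $R(X,E)$ is the Rips complex (vertex set $X$, simplices the finite $F$ with $F\times F\subset E$); $e(x,y)$ the edge-path; $f_E\colon R(X,E)\to R(Y,f(E))$ the induced simplicial map. Paths $c,d$ in $R(X,E)$ with end-points in $X$ are $E$-homotopic if their initial points $x_c,x_d$ and terminal points $y_c,y_d$ satisfy $(x_c,x_d),(y_c,y_d)\in E$ and $c\simeq e(x_c,x_d)\ast d\ast e(y_d,y_c)$ rel. end-points in $R(X,E)$. A generalized path from $x$ to $y$ is a family $\{[c_E]\}_E$ over all entourages of homotopy classes rel. end-points of paths from $x$ to $y$ in $R(X,E)$ with $c_F\simeq c_E$ in $R(X,E)$ for $F\subset E$. $GP(X,x_0)$ is the set of generalized paths starting at $x_0$ with the uniform structure with base $F^\ast=\{(c,d): c_F \text{ is } F\text{-homotopic to } d_F\}$; two generalized paths $c,d$ are called $F$-homotopic if $(c,d)\in F^\ast$. For uniformly continuous $f$, $\widetilde f\colon GP(X,x_0)\to GP(Y,f(x_0))$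 is defined by $\widetilde f(c)_F=[f_E(c_E)]$ with $E=f^{-1}(F)$. $X$ is joinable if any two points are joined by a generalized path. GP1: every generalized path in $Y$ starting at $f(x_0)$ equals $\widetilde f(d)$ for some generalized path $d$ in $X$ starting at $x_0$ (for every $x_0\in X$). GP2: for every entourage $E$ of $X$ there is an entourage $F$ of $X$ such that any two generalized paths $\alpha,\beta$ in $X$ with common origin are $E$-homotopic whenever $\widetilde f(\alpha)$ and $\widetilde f(\beta)$ are $f(F)$-homotopic. *)

theory Defs
  imports Complex_Main
begin

definition ent :: "('a::uniform_space \<times> 'a) set \<Rightarrow> bool" where
  "ent E \<longleftrightarrow> eventually (\<lambda>p. p \<in> E) uniformity"

definition pimg :: "('a \<Rightarrow> 'b) \<Rightarrow> ('a \<times> 'a) set \<Rightarrow> ('b \<times> 'b) set" where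
  "pimg f E = map_prod f f ` E"

definition pre :: "('a \<Rightarrow> 'b) \<Rightarrow> ('b \<times> 'b) set \<Rightarrow> ('a \<times> 'a) set" where
  "pre f F = {(x, y). (f x, f y) \<in> F}"

definition generates :: "('a::uniform_space \<Rightarrow> 'b::uniform_space) \<Rightarrow> bool" where
  "generates f \<longleftrightarrow> surj f \<and> (\<forall>E. ent E \<longrightarrow> ent (pimg f E))
     \<and> (\<forall>F. ent F \<longrightarrow> (\<exists>E. ent E \<and> pimg f E \<subseteq> F))"

text \<open>An edge path in R(X,E): a nonempty vertex list whose consecutive vertices span an edge
  (an edge {x,y} of R(X,E) requires {x,y} x {x,y} to be contained in E).\<close>
definition epath :: "('a \<times> 'a) set \<Rightarrow> 'a list \<Rightarrow> bool" where
  "epath E xs \<longleftrightarrow> xs \<noteq> [] \<and>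
     (\<forall>i. Suc i < length xs \<longrightarrow> {xs ! i, xs ! Suc i} \<times> {xs ! i, xs ! Suc i} \<subseteq> E)"

text \<open>Elementary edge-path moves (Spanier): repeat a vertex; replace a b c by a c when
  {a,b,c} is a simplex of R(X,E).\<close>
definition rips_move :: "('a \<times> 'a) set \<Rightarrow> ('a list \<times> 'a list) set" where
  "rips_move E =
     {(xs @ a # ys, xs @ a # a # ys) | xs a ys. True} \<union>
     {(xs @ a # b # c # ys, xs @ a # c # ys) | xs a b c ys. {a, b, c} \<times> {a, b, c} \<subseteq> E}"

definition rips_step :: "('a \<times> 'a) set \<Rightarrow> ('a list \<times> 'a list) set" where
  "rips_step E = {(p, q). (p, q) \<in> rips_move E \<union> (rips_move E)\<inverse> \<and> epath E p \<and> epath E q}"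

definition homot :: "('a \<times> 'a) set \<Rightarrow> 'a list \<Rightarrow> 'a list \<Rightarrow> bool" where
  "homot E p q \<longleftrightarrow> epath E p \<and> (p, q) \<in> (rips_step E)\<^sup>*"

text \<open>E-homotopy of paths: c is homotopic rel end-points to e(x_c,x_d) * d * e(y_d,y_c).\<close>
definition ehom :: "('a \<times> 'a) set \<Rightarrow> 'a list \<Rightarrow> 'a list \<Rightarrow> bool" where
  "ehom E c d \<longleftrightarrow> epath E c \<and> epath E d \<and>
     (hd c, hd d) \<in> E \<and> (last c, last d) \<in> E \<and>
     homot E c (hd c # d @ [last c])"

text \<open>A generalized path is a family E \<mapsto> [c_E] of homotopy classes (empty for
  non-entourages, so that equality of families is equality of generalized paths).\<close>
definition is_gpath :: "'a::uniform_space \<Rightarrow> 'a \<Rightarrow> (('a \<times> 'a) set \<Rightarrow> 'a list set) \<Rightarrow> bool" where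
  "is_gpath x y c \<longleftrightarrow>
     (\<forall>E. \<not> ent E \<longrightarrow> c E = {}) \<and>
     (\<forall>E. ent E \<longrightarrow> (\<exists>p. epath E p \<and> hd p = x \<and> last p = y \<and> c E = {q. homot E p q})) \<and>
     (\<forall>E F. ent E \<longrightarrow> ent F \<longrightarrow> F \<subseteq> E \<longrightarrow> c F \<subseteq> c E)"

definition GP :: "'a::uniform_space \<Rightarrow> (('a \<times> 'a) set \<Rightarrow> 'a list set) set" where
  "GP x0 = {c. \<exists>y. is_gpath x0 y c}"

definition joinable :: "'a::uniform_space itself \<Rightarrow> bool" where
  "joinable _ \<longleftrightarrow> (\<forall>x y :: 'a. \<exists>c. is_gpath x y c)"

definition gp_hom :: "('a \<times> 'a) set \<Rightarrow> (('a \<times> 'a) set \<Rightarrow> 'a list set) \<Rightarrow>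
    (('a \<times> 'a) set \<Rightarrow> 'a list set) \<Rightarrow> bool" where
  "gp_hom F c d \<longleftrightarrow> (\<exists>p q. p \<in> c F \<and> q \<in> d F \<and> ehom F p q)"

definition gp_map :: "('a::uniform_space \<Rightarrow> 'b::uniform_space) \<Rightarrow>
    (('a \<times> 'a) set \<Rightarrow> 'a list set) \<Rightarrow> (('b \<times> 'b) set \<Rightarrow> 'b list set)" where
  "gp_map f c = (\<lambda>F. if ent F then {q. \<exists>p \<in> c (pre f F). homot F (map f p) q} else {})"

definition gp_ucont :: "(('a::uniform_space \<times> 'a) set \<Rightarrow> 'a list set) set \<Rightarrow>
    ((('a \<times> 'a) set \<Rightarrow> 'a list set) \<Rightarrow> (('b::uniform_space \<times> 'b) set \<Rightarrow> 'b list set)) \<Rightarrow> bool" where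
  "gp_ucont S g \<longleftrightarrow> (\<forall>F. ent F \<longrightarrow> (\<exists>E. ent E \<and>
     (\<forall>c\<in>S. \<forall>d\<in>S. gp_hom E c d \<longrightarrow> gp_hom F (g c) (g d))))"

definition gp_uequiv :: "(('a::uniform_space \<times> 'a) set \<Rightarrow> 'a list set) set \<Rightarrow>
    (('b::uniform_space \<times> 'b) set \<Rightarrow> 'b list set) set \<Rightarrow>
    ((('a \<times> 'a) set \<Rightarrow> 'a list set) \<Rightarrow> (('b \<times> 'b) set \<Rightarrow> 'b list set)) \<Rightarrow> bool" where
  "gp_uequiv S T g \<longleftrightarrow> g ` S \<subseteq> T \<and> gp_ucont S g \<and>
     (\<exists>h. h ` T \<subseteq> S \<and> (\<forall>c\<in>S. h (g c) = c) \<and> (\<forall>d\<in>T. g (h d) = d) \<and> gp_ucont T h)"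

definition GP1 :: "('a::uniform_space \<Rightarrow> 'b::uniform_space) \<Rightarrow> bool" where
  "GP1 f \<longleftrightarrow> (\<forall>x0. \<forall>c \<in> GP (f x0). \<exists>d \<in> GP x0. gp_map f d = c)"

definition GP2 :: "('a::uniform_space \<Rightarrow> 'b::uniform_space) \<Rightarrow> bool" where
  "GP2 f \<longleftrightarrow> (\<forall>E. ent E \<longrightarrow> (\<exists>F. ent F \<and>
     (\<forall>x0. \<forall>\<alpha> \<in> GP x0. \<forall>\<beta> \<in> GP x0.
        gp_hom (pimg f F) (gp_map f \<alpha>) (gp_map f \<beta>) \<longrightarrow> gp_hom E \<alpha> \<beta>)))"

end

theory Submission
  imports Defs
begin

lemma epath_Nil[simp]: "\<not> epath E []" by (simp add: epath_def)
lemma epath_single[simp]: "epath E [a]" by (simp add: epath_def)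
lemma epath_Cons2[simp]: "epath E (a#b#xs) \<longleftrightarrow> {a,b}\<times>{a,b} \<subseteq> E \<and> epath E (b#xs)"
proof
  assume h: "epath E (a#b#xs)"
  have l: "Suc 0 < length (a#b#xs)" by simp
  have "{(a#b#xs)!0, (a#b#xs)!Suc 0} \<times> {(a#b#xs)!0, (a#b#xs)!Suc 0} \<subseteq> E"
    using h l unfolding epath_def by blast
  then have "{a,b}\<times>{a,b} \<subseteq> E" by simp
  moreover have "epath E (b#xs)" unfolding epath_def
  proof (intro conjI allI impI)
    fix i assume "Suc i < length (b#xs)"
    then have "Suc (Suc i) < length (a#b#xs)" by simp
    with h have "{(a#b#xs)! Suc i, (a#b#xs)! Suc (Suc i)} \<times> {(a#b#xs)! Suc i, (a#b#xs)! Suc (Suc i)} \<subseteq> E"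
      unfolding epath_def by blast
    then show "{(b # xs) ! i, (b # xs) ! Suc i} \<times> {(b # xs) ! i, (b # xs) ! Suc i} \<subseteq> E"
      by simp
  qed simp
  ultimately show "{a,b}\<times>{a,b} \<subseteq> E \<and> epath E (b#xs)" by simp
next
  assume h: "{a,b}\<times>{a,b} \<subseteq> E \<and> epath E (b#xs)"
  show "epath E (a#b#xs)" unfolding epath_def
  proof (intro conjI allI impI)
    fix i assume i: "Suc i < length (a#b#xs)"
    show "{(a#b # xs) ! i, (a#b # xs) ! Suc i} \<times> {(a#b # xs) ! i, (a#b # xs) ! Suc i} \<subseteq> E"
    proof (cases i)
      case 0 then show ?thesis using h by simp
    next
      case (Suc j) then show ?thesis using h i unfolding epath_def by simp
    qed
  qed simp
qed

lemma epath_append: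
  assumes "xs \<noteq> []" "ys \<noteq> []"
  shows "epath E (xs @ ys) \<longleftrightarrow> epath E xs \<and> epath E ys \<and> {last xs, hd ys} \<times> {last xs, hd ys} \<subseteq> E"
  using assms
proof (induction xs)
  case Nil then show ?case by simp
next
  case (Cons a xs)
  show ?case
  proof (cases xs)
    case Nil
    then show ?thesis using Cons.prems by (cases ys) auto
  next
    case (Cons b zs)
    have IH: "epath E (xs @ ys) \<longleftrightarrow> epath E xs \<and> epath E ys \<and> {last xs, hd ys} \<times> {last xs, hd ys} \<subseteq> E"
      using Cons.IH Cons.prems \<open>xs = b#zs\<close> by blast
    have 1: "epath E ((a#xs)@ys) = ({a,b}\<times>{a,b} \<subseteq> E \<and> epath E (xs@ys))" using Cons by simp
    have 2: "epath E (a#xs) = ({a,b}\<times>{a,b} \<subseteq> E \<and> epath E xs)" using Cons by simp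
    have 3: "last (a#xs) = last xs" using Cons by simp
    show ?thesis unfolding 1 2 3 IH by blast
  qed
qed

lemma epath_rev: "epath E (rev xs) \<longleftrightarrow> epath E xs"
proof -
  have "epath E xs \<Longrightarrow> epath E (rev xs)" for xs
  proof (induction xs rule: induct_list012)
    case (3 a b zs)
    then have "epath E (rev (b#zs))" by simp
    then show ?case using 3 epath_append[of "rev (b#zs)" "[a]" E] by auto
  qed auto
  from this[of xs] this[of "rev xs"] show ?thesis by auto
qed

lemma epath_mono: "epath E p \<Longrightarrow> E \<subseteq> E' \<Longrightarrow> epath E' p"
  unfolding epath_def by blast

lemma epath_map: "epath (pre f F) p \<Longrightarrow> epath F (map f p)"
  unfolding epath_def pre_def by (auto simp: subset_iff)

lemma epath_replace:
  assumes "epath E (u@p@v)" "epath E q" "p \<noteq> []" "q \<noteq> []" "hd q = hd p" "last q = last p"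
  shows "epath E (u@q@v)"
proof -
  have A: "epath E (q@v)" if "epath E (p@v)"
  proof (cases "v = []")
    case True then show ?thesis using assms by simp
  next
    case False then show ?thesis using that assms epath_append by metis
  qed
  show ?thesis
  proof (cases "u = []")
    case True then show ?thesis using A assms by simp
  next
    case False
    have "epath E u \<and> epath E (p@v) \<and> {last u, hd (p@v)} \<times> {last u, hd (p@v)} \<subseteq> E"
      using epath_append[OF False, of "p@v" E] assms by simp
    moreover have "hd (q@v) = hd (p@v)" using assms by simp
    ultimately show ?thesis using A epath_append[OF False, of "q@v" E] assms by simp
  qed
qed

lemma move_iff: "(p,q) \<in> rips_move E \<longleftrightarrow>
   (\<exists>xs a ys. p = xs@a#ys \<and> q = xs@a#a#ys) \<or>
   (\<exists>xs a b c ys. p = xs@a#b#c#ys \<and> q = xs@a#c#ys \<and> {a,b,c}\<times>{a,b,c} \<subseteq> E)"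
  (is "?l \<longleftrightarrow> ?A \<or> ?B")
proof
  assume "?l"
  then consider (A) xs a ys where "p = xs@a#ys" "q = xs@a#a#ys"
    | (B) xs a b c ys where "p = xs@a#b#c#ys" "q = xs@a#c#ys" "{a,b,c}\<times>{a,b,c} \<subseteq> E"
    unfolding rips_move_def by blast
  then show "?A \<or> ?B"
  proof cases
    case A then have ?A by blast then show ?thesis ..
  next
    case B then have ?B by blast then show ?thesis ..
  qed
next
  assume "?A \<or> ?B" then show ?l
  proof
    assume ?A then obtain xs a ys where "p = xs@a#ys" "q = xs@a#a#ys" by blast
    then show ?l unfolding rips_move_def by blast
  next
    assume ?B then obtain xs a b c ys where "p = xs@a#b#c#ys" "q = xs@a#c#ys" "{a,b,c}\<times>{a,b,c} \<subseteq> E" by blast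
    then show ?l unfolding rips_move_def by blast
  qed
qed

lemma move_hd_last: "(p,q) \<in> rips_move E \<Longrightarrow> p \<noteq> [] \<and> q \<noteq> [] \<and> hd q = hd p \<and> last q = last p"
  unfolding move_iff by (auto simp: hd_append)

lemma move_mono: "(p,q) \<in> rips_move E \<Longrightarrow> E \<subseteq> E' \<Longrightarrow> (p,q) \<in> rips_move E'"
  unfolding move_iff by blast

lemma move_ctx: "(p,q) \<in> rips_move E \<Longrightarrow> (u@p@v, u@q@v) \<in> rips_move E"
  unfolding move_iff
  apply (elim disjE exE conjE)
   apply (rule disjI1, rule_tac x="u@xs" in exI, rule_tac x=a in exI, rule_tac x="ys@v" in exI, simp)
  apply (rule disjI2, rule_tac x="u@xs" in exI, rule_tac x=a in exI, rule_tac x=b in exI,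
      rule_tac x=c in exI, rule_tac x="ys@v" in exI, simp)
  done

lemma move_map: "(p,q) \<in> rips_move (pre f F) \<Longrightarrow> (map f p, map f q) \<in> rips_move F"
  unfolding move_iff
  apply (elim disjE exE conjE)
   apply (rule disjI1, rule_tac x="map f xs" in exI, rule_tac x="f a" in exI, rule_tac x="map f ys" in exI, simp)
  apply (rule disjI2, rule_tac x="map f xs" in exI, rule_tac x="f a" in exI, rule_tac x="f b" in exI,
      rule_tac x="f c" in exI, rule_tac x="map f ys" in exI)
  apply (simp only: list.map map_append)
  apply (rule conjI, rule refl, rule conjI, rule refl)
  apply (unfold pre_def) apply blast
  done

lemma move_rev: "(p,q) \<in> rips_move E \<Longrightarrow> (rev p, rev q) \<in> rips_move E"
  unfolding move_iff
  apply (elim disjE exE conjE)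
   apply (rule disjI1, rule_tac x="rev ys" in exI, rule_tac x=a in exI, rule_tac x="rev xs" in exI, simp)
  apply (rule disjI2, rule_tac x="rev ys" in exI, rule_tac x=c in exI, rule_tac x=b in exI,
      rule_tac x=a in exI, rule_tac x="rev xs" in exI)
  apply (simp add: insert_commute)
  done

lemma step_iff: "(p,q) \<in> rips_step E \<longleftrightarrow> ((p,q) \<in> rips_move E \<or> (q,p) \<in> rips_move E) \<and> epath E p \<and> epath E q"
  unfolding rips_step_def by auto

lemma step_sym: "(p,q) \<in> rips_step E \<Longrightarrow> (q,p) \<in> rips_step E"
  unfolding step_iff by blast

lemma step_props: "(p,q) \<in> rips_step E \<Longrightarrow> epath E p \<and> epath E q \<and> hd q = hd p \<and> last q = last p"
proof -
  assume "(p,q) \<in> rips_step E"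
  then have m: "(p,q) \<in> rips_move E \<or> (q,p) \<in> rips_move E" "epath E p" "epath E q"
    unfolding step_iff by blast+
  from m(1) have "hd q = hd p \<and> last q = last p" using move_hd_last[of p q E] move_hd_last[of q p E] by (elim disjE) simp_all
  then show ?thesis using m by blast
qed

lemma homot_props: "homot E p q \<Longrightarrow> epath E p \<and> epath E q \<and> hd q = hd p \<and> last q = last p"
  unfolding homot_def
proof (elim conjE)
  assume "epath E p" "(p,q) \<in> (rips_step E)\<^sup>*"
  from \<open>(p,q) \<in> _\<close> show ?thesis
  proof (induction rule: rtrancl_induct)
    case base then show ?case using \<open>epath E p\<close> by simp
  next
    case (step y z) then show ?case using step_props[OF step.hyps(2)] by simp
  qed
qed

lemma homot_refl: "epath E p \<Longrightarrow> homot E p p" unfolding homot_def by simp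

lemma rtrancl_sym_step: "(p,q) \<in> (rips_step E)\<^sup>* \<Longrightarrow> (q,p) \<in> (rips_step E)\<^sup>*"
  by (induction rule: rtrancl_induct) (auto intro: converse_rtrancl_into_rtrancl step_sym)

lemma homot_sym: "homot E p q \<Longrightarrow> homot E q p"
  using homot_props[of E p q] rtrancl_sym_step unfolding homot_def by blast

lemma homot_trans: "homot E p q \<Longrightarrow> homot E q r \<Longrightarrow> homot E p r"
  unfolding homot_def by auto

lemma homot_step: "(p,q) \<in> rips_move E \<Longrightarrow> epath E p \<Longrightarrow> epath E q \<Longrightarrow> homot E p q"
proof -
  assume a: "(p,q) \<in> rips_move E" "epath E p" "epath E q"
  then have "(p,q) \<in> rips_step E" unfolding step_iff by blast
  then show ?thesis using a unfolding homot_def by blast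
qed

lemma homot_mono: "homot E p q \<Longrightarrow> E \<subseteq> E' \<Longrightarrow> homot E' p q"
proof -
  assume h: "homot E p q" and s: "E \<subseteq> E'"
  have "rips_step E \<subseteq> rips_step E'"
  proof
    fix x assume "x \<in> rips_step E"
    then obtain a b where x: "x = (a,b)" "(a,b) \<in> rips_step E" by (cases x) auto
    from x(2) have m: "(a,b)\<in>rips_move E \<or> (b,a)\<in>rips_move E" "epath E a" "epath E b"
      unfolding step_iff by blast+
    have "(a,b) \<in> rips_step E'" unfolding step_iff using m move_mono[OF _ s] epath_mono[OF _ s] by blast
    then show "x \<in> rips_step E'" using x by simp
  qed
  then show ?thesis using h s unfolding homot_def by (meson epath_mono rtrancl_mono subsetD)
qed

lemma homot_map: "homot (pre f F) p q \<Longrightarrow> homot F (map f p) (map f q)"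
  unfolding homot_def
proof (elim conjE)
  assume e: "epath (pre f F) p" and r: "(p,q) \<in> (rips_step (pre f F))\<^sup>*"
  from r have "(map f p, map f q) \<in> (rips_step F)\<^sup>*"
  proof (induction rule: rtrancl_induct)
    case (step y z)
    then have "(map f y, map f z) \<in> rips_step F" unfolding step_iff using move_map epath_map by blast
    then show ?case using step by auto
  qed simp
  then show "epath F (map f p) \<and> (map f p, map f q) \<in> (rips_step F)\<^sup>*" using e epath_map by blast
qed

lemma homot_rev: "homot E p q \<Longrightarrow> homot E (rev p) (rev q)"
  unfolding homot_def
proof (elim conjE)
  assume e: "epath E p" and r: "(p,q) \<in> (rips_step E)\<^sup>*"
  from r have "(rev p, rev q) \<in> (rips_step E)\<^sup>*"
  proof (induction rule: rtrancl_induct)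
    case (step y z)
    then have "(rev y, rev z) \<in> rips_step E" unfolding step_iff using move_rev epath_rev by blast
    then show ?case using step by auto
  qed simp
  then show "epath E (rev p) \<and> (rev p, rev q) \<in> (rips_step E)\<^sup>*" using e epath_rev by blast
qed

lemma homot_ctx: "homot E p q \<Longrightarrow> epath E (u@p@v) \<Longrightarrow> homot E (u@p@v) (u@q@v)"
  unfolding homot_def
proof (elim conjE)
  assume e: "epath E p" and r: "(p,q) \<in> (rips_step E)\<^sup>*" and e2: "epath E (u@p@v)"
  from r have "(u@p@v, u@q@v) \<in> (rips_step E)\<^sup>* \<and> epath E (u@q@v)"
  proof (induction rule: rtrancl_induct)
    case (step y z)
    have sp: "epath E y \<and> epath E z \<and> hd z = hd y \<and> last z = last y" using step_props[OF step.hyps(2)] .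
    have ne: "y \<noteq> []" "z \<noteq> []" using sp by auto
    have ez: "epath E (u@z@v)" using epath_replace[of E u y v z] step.IH sp ne by blast
    have "(u@y@v, u@z@v) \<in> rips_step E" using step.hyps(2) step.IH ez unfolding step_iff
      using move_ctx by blast
    then show ?case using step.IH ez by auto
  qed (simp add: e2)
  then show "epath E (u@p@v) \<and> (u@p@v, u@q@v) \<in> (rips_step E)\<^sup>*" using e2 by blast
qed


lemma epath_dup: "epath E (u@a#v) \<Longrightarrow> (a,a) \<in> E \<Longrightarrow> epath E (u@a#a#v)"
  using epath_replace[of E u "[a]" v "[a,a]"] by simp

lemma homot_dup: "epath E (u@a#v) \<Longrightarrow> (a,a) \<in> E \<Longrightarrow> homot E (u@a#v) (u@a#a#v)"
proof -
  assume e: "epath E (u@a#v)" and aa: "(a,a) \<in> E"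
  have m: "(u@a#v, u@a#a#v) \<in> rips_move E" unfolding move_iff by blast
  show ?thesis by (rule homot_step[OF m e epath_dup[OF e aa]])
qed

lemma homot_undup: "epath E (u@a#v) \<Longrightarrow> (a,a) \<in> E \<Longrightarrow> homot E (u@a#a#v) (u@a#v)"
  by (rule homot_sym[OF homot_dup])

lemma homot_tri: "epath E (u@a#b#c#v) \<Longrightarrow> {a,b,c}\<times>{a,b,c} \<subseteq> E \<Longrightarrow> homot E (u@a#b#c#v) (u@a#c#v)"
proof -
  assume e: "epath E (u@a#b#c#v)" and s: "{a,b,c}\<times>{a,b,c} \<subseteq> E"
  have sac: "{a,c}\<times>{a,c} \<subseteq> E" using s by blast
  have "epath E (u@[a,c]@v)" using epath_replace[of E u "[a,b,c]" v "[a,c]"] e sac by simp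
  then have e2: "epath E (u@a#c#v)" by simp
  have m: "(u@a#b#c#v, u@a#c#v) \<in> rips_move E" unfolding move_iff using s by blast
  show ?thesis by (rule homot_step[OF m e e2])
qed

lemma homot_cancel: "(\<And>x. (x,x) \<in> E) \<Longrightarrow> epath E r \<Longrightarrow> homot E (rev r @ r) [last r]"
proof (induction r rule: induct_list012)
  case 1 then show ?case by simp
next
  case (2 a) then show ?case using homot_undup[of E "[]" a "[]"] by simp
next
  case (3 a b zs)
  have er': "epath E (b#zs)" and sab: "{a,b}\<times>{a,b} \<subseteq> E" using 3 by auto
  have s2: "{last (rev (b#zs)), hd (a#b#zs)} \<times> {last (rev (b#zs)), hd (a#b#zs)} \<subseteq> E"
    using sab by auto
  have ea: "epath E (rev (b#zs) @ (a # b # zs))"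
    using epath_append[of "rev (b#zs)" "a#b#zs" E] epath_rev[of E "b#zs"] er' 3(4) s2 by simp
  have h1: "homot E (rev (b#zs) @ a # a # (b#zs)) (rev (b#zs) @ a # (b#zs))"
    by (rule homot_undup[OF ea]) (use 3(3) in blast)
  have e2: "epath E (rev zs @ b # a # b # zs)" using ea by simp
  have sbab: "{b,a,b}\<times>{b,a,b} \<subseteq> E" using sab by blast
  have h2: "homot E (rev zs @ b # a # b # zs) (rev zs @ b # b # zs)"
    by (rule homot_tri[OF e2 sbab])
  have h3: "homot E (rev (b#zs) @ (b#zs)) [last (b#zs)]" using 3 er' by blast
  have h2': "homot E (rev (b#zs) @ a # (b#zs)) (rev (b#zs) @ (b#zs))" using h2 by simp
  have "homot E (rev (a#b#zs) @ (a#b#zs)) [last (b#zs)]"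
    using homot_trans[OF homot_trans[OF h1 h2'] h3] by simp
  then show ?case by simp
qed

lemma ent_refl: "ent E \<Longrightarrow> (x,x) \<in> E"
  unfolding ent_def using uniformity_refl[of "\<lambda>p. p \<in> E"] by simp

lemma ent_Int: "ent E \<Longrightarrow> ent F \<Longrightarrow> ent (E \<inter> F)"
  unfolding ent_def by (simp add: eventually_conj)

lemma ent_mono: "ent E \<Longrightarrow> E \<subseteq> F \<Longrightarrow> ent F"
  unfolding ent_def by (auto elim: eventually_mono)

lemma gen_pre: "generates f \<Longrightarrow> ent F \<Longrightarrow> ent (pre f F)"
proof -
  assume g: "generates f" and F: "ent F"
  then obtain E where "ent E" "pimg f E \<subseteq> F" unfolding generates_def by blast
  then have "E \<subseteq> pre f F" unfolding pimg_def pre_def by auto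
  then show ?thesis using \<open>ent E\<close> ent_mono by blast
qed

lemma gen_pimg: "generates f \<Longrightarrow> ent E \<Longrightarrow> ent (pimg f E)"
  unfolding generates_def by blast

lemma ent_sep:
  fixes x y :: "'a::{uniform_space,t2_space}"
  assumes "x \<noteq> y" shows "\<exists>E. ent E \<and> (x,y) \<notin> E"
proof -
  obtain U where U: "open U" "x \<in> U" "y \<notin> U" using t1_space[OF assms] by blast
  have "eventually (\<lambda>(x', z). x' = x \<longrightarrow> z \<in> U) uniformity" using U open_uniformity by blast
  then have "ent {(x',z). x' = x \<longrightarrow> z \<in> U}" unfolding ent_def by (simp add: case_prod_beta')
  then show ?thesis using U by blast
qed


definition cls :: "('a \<times> 'a) set \<Rightarrow> 'a list \<Rightarrow> 'a list set" where
  "cls E p = {q. homot E p q}"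

lemma cls_self: "epath E p \<Longrightarrow> p \<in> cls E p"
  unfolding cls_def by (simp add: homot_refl)

lemma cls_eq: "homot E p q \<Longrightarrow> cls E p = cls E q"
  unfolding cls_def using homot_sym homot_trans by blast

lemma cls_mono: "E \<subseteq> E' \<Longrightarrow> cls E p \<subseteq> cls E' p"
  unfolding cls_def using homot_mono by blast

lemma epath_undup: "epath E (u@a#a#v) \<Longrightarrow> epath E (u@a#v)"
  using epath_replace[of E u "[a,a]" v "[a]"] by simp

lemma epath_aa: "epath E (u@a#a#v) \<Longrightarrow> (a,a) \<in> E"
proof -
  assume e: "epath E (u@a#a#v)"
  have "epath E (u@[a,a])"
  proof (cases "v = []")
    case True then show ?thesis using e by simp
  next
    case False
    then show ?thesis using epath_append[of "u@[a,a]" v E] e by simp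
  qed
  then have "epath E [a,a]"
    by (cases "u = []") (auto simp: epath_append[of u "[a,a]" E])
  then show ?thesis by simp
qed

lemma homot_undup2: "epath E (u@a#a#v) \<Longrightarrow> homot E (u@a#a#v) (u@a#v)"
proof -
  assume e: "epath E (u@a#a#v)"
  show ?thesis by (rule homot_undup[OF epath_undup[OF e] epath_aa[OF e]])
qed

lemma epath_cat: "epath E p \<Longrightarrow> epath E q \<Longrightarrow> last p = hd q \<Longrightarrow> (hd q, hd q) \<in> E \<Longrightarrow> epath E (p@q)"
  using epath_append[of p q E] by (cases "p = []"; cases "q = []") auto

lemma homot_cat: "homot E p p' \<Longrightarrow> homot E q q' \<Longrightarrow> epath E (p@q) \<Longrightarrow> homot E (p@q) (p'@q')"
proof -
  assume h1: "homot E p p'" and h2: "homot E q q'" and e: "epath E (p@q)"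
  have a: "homot E ([]@p@q) ([]@p'@q)" by (rule homot_ctx[OF h1]) (use e in simp)
  then have e2: "epath E (p'@q@[])" using homot_props by fastforce
  have b: "homot E (p'@q@[]) (p'@q'@[])" by (rule homot_ctx[OF h2 e2])
  show ?thesis using homot_trans[of E "p@q" "p'@q" "p'@q'"] a b by simp
qed

lemma homot_ends: "epath E p \<Longrightarrow> (hd p, hd p) \<in> E \<Longrightarrow> (last p, last p) \<in> E \<Longrightarrow> homot E p (hd p # p @ [last p])"
proof -
  assume e: "epath E p" and h: "(hd p, hd p) \<in> E" and l: "(last p, last p) \<in> E"
  obtain a t where p: "p = a # t" using e by (cases p) auto
  have h1: "homot E ([]@a#t) ([]@a#a#t)" by (rule homot_dup) (use e h p in simp_all)
  define q where "q = a#a#t"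
  have qne: "q \<noteq> []" and ql: "last q = last p" unfolding q_def p by simp_all
  have qe: "epath E (butlast q @ last q # [])" using homot_props[OF h1] qne by (simp add: q_def)
  have h2: "homot E (butlast q @ last q # []) (butlast q @ last q # last q # [])"
    by (rule homot_dup[OF qe]) (use l ql in simp)
  have "homot E p q" using h1 p q_def by simp
  moreover have "homot E q (q @ [last q])" using h2 qne
    by (metis append_butlast_last_id append_Cons append_Nil append_assoc)
  ultimately show ?thesis using homot_trans ql unfolding q_def p by fastforce
qed

lemma gpath_cls:
  assumes "is_gpath x y c" "ent E" "q \<in> c E"
  shows "epath E q \<and> hd q = x \<and> last q = y \<and> c E = cls E q \<and> q \<noteq> []"
proof -
  obtain p where p: "epath E p" "hd p = x" "last p = y" "c E = {q. homot E p q}"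
    using assms(1,2) unfolding is_gpath_def by blast
  have h: "homot E p q" using assms(3) p(4) by simp
  have "c E = cls E q" using p(4) cls_eq[OF h] unfolding cls_def by simp
  then show ?thesis using homot_props[OF h] p by auto
qed

lemma gpath_ne: "is_gpath x y c \<Longrightarrow> ent E \<Longrightarrow> \<exists>q. q \<in> c E"
  unfolding is_gpath_def using homot_refl by fastforce

lemma gpath_mono: "is_gpath x y c \<Longrightarrow> ent F \<Longrightarrow> F \<subseteq> E \<Longrightarrow> c F \<subseteq> c E"
proof -
  assume a: "is_gpath x y c" "ent F" "F \<subseteq> E"
  have E: "ent E" using ent_mono a(2,3) by blast
  have m: "\<forall>E F. ent E \<longrightarrow> ent F \<longrightarrow> F \<subseteq> E \<longrightarrow> c F \<subseteq> c E"
    using conjunct2[OF conjunct2[OF a(1)[unfolded is_gpath_def]]] .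
  show ?thesis using m E a(2,3) by simp
qed

lemma gpath_empty: "is_gpath x y c \<Longrightarrow> \<not> ent E \<Longrightarrow> c E = {}"
proof -
  assume a: "is_gpath x y c" "\<not> ent E"
  show ?thesis using conjunct1[OF a(1)[unfolded is_gpath_def]] a(2) by simp
qed

lemma gpath_ext:
  assumes "is_gpath x y c" "is_gpath x' y' d" "\<And>E. ent E \<Longrightarrow> \<exists>p\<in>c E. \<exists>q\<in>d E. homot E p q"
  shows "c = d"
proof
  fix E show "c E = d E"
  proof (cases "ent E")
    case True
    then obtain p q where pq: "p \<in> c E" "q \<in> d E" "homot E p q" using assms(3) by blast
    then show ?thesis using gpath_cls[OF assms(1) True pq(1)] gpath_cls[OF assms(2) True pq(2)] cls_eq[OF pq(3)] by simp
  next
    case False then show ?thesis using gpath_empty assms by metis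
  qed
qed

lemma map_cls:
  assumes g: "generates f" and c: "is_gpath x y c" and F: "ent F" and p: "p \<in> c (pre f F)"
  shows "gp_map f c F = cls F (map f p)"
proof -
  have E: "ent (pre f F)" using gen_pre[OF g F] .
  have cE: "c (pre f F) = cls (pre f F) p" using gpath_cls[OF c E p] by blast
  have "gp_map f c F = {q. \<exists>p'\<in>cls (pre f F) p. homot F (map f p') q}"
    unfolding gp_map_def using F cE by simp
  also have "\<dots> = cls F (map f p)"
  proof
    show "{q. \<exists>p'\<in>cls (pre f F) p. homot F (map f p') q} \<subseteq> cls F (map f p)"
      unfolding cls_def using homot_map homot_trans by blast
    show "cls F (map f p) \<subseteq> {q. \<exists>p'\<in>cls (pre f F) p. homot F (map f p') q}"
      using cls_self[OF gpath_cls[OF c E p, THEN conjunct1]] unfolding cls_def by blast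
  qed
  finally show ?thesis .
qed

lemma gpath_map:
  fixes f :: "'a::uniform_space \<Rightarrow> 'b::uniform_space"
  assumes g: "generates f" and c: "is_gpath x y c"
  shows "is_gpath (f x) (f y) (gp_map f c)"
  unfolding is_gpath_def
proof (intro conjI allI impI)
  fix F :: "('b \<times> 'b) set" assume "\<not> ent F" then show "gp_map f c F = {}" unfolding gp_map_def by simp
next
  fix F :: "('b \<times> 'b) set" assume F: "ent F"
  have E: "ent (pre f F)" using gen_pre[OF g F] .
  obtain p where p: "p \<in> c (pre f F)" using gpath_ne[OF c E] by blast
  have pp: "epath (pre f F) p" "hd p = x" "last p = y" "p \<noteq> []" using gpath_cls[OF c E p] by auto
  show "\<exists>q. epath F q \<and> hd q = f x \<and> last q = f y \<and> gp_map f c F = {r. homot F q r}"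
    using map_cls[OF g c F p] epath_map[OF pp(1)] pp(2-4) unfolding cls_def
    by (intro exI[of _ "map f p"]) (simp add: hd_map last_map)
next
  fix E F :: "('b \<times> 'b) set" assume E: "ent E" and F: "ent F" and s: "F \<subseteq> E"
  have E': "ent (pre f E)" and F': "ent (pre f F)" using gen_pre g E F by auto
  obtain p where p: "p \<in> c (pre f F)" using gpath_ne[OF c F'] by blast
  have "pre f F \<subseteq> pre f E" using s unfolding pre_def by auto
  then have p2: "p \<in> c (pre f E)" using gpath_mono[OF c F'] p by blast
  show "gp_map f c F \<subseteq> gp_map f c E"
    using map_cls[OF g c F p] map_cls[OF g c E p2] cls_mono[OF s] by simp
qed

definition gcat :: "(('a::uniform_space \<times> 'a) set \<Rightarrow> 'a list set) \<Rightarrow> (('a \<times> 'a) set \<Rightarrow> 'a list set) \<Rightarrow> (('a \<times> 'a) set \<Rightarrow> 'a list set)" where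
  "gcat c d = (\<lambda>E. if ent E then {r. \<exists>p\<in>c E. \<exists>q\<in>d E. homot E (p@q) r} else {})"

lemma gcat_cls:
  assumes c: "is_gpath x y c" and d: "is_gpath y z d" and E: "ent E" and p: "p \<in> c E" and q: "q \<in> d E"
  shows "gcat c d E = cls E (p@q) \<and> epath E (p@q)"
proof -
  have pp: "epath E p" "last p = y" "c E = cls E p" using gpath_cls[OF c E p] by auto
  have qq: "epath E q" "hd q = y" "d E = cls E q" using gpath_cls[OF d E q] by auto
  have e: "epath E (p@q)" using epath_cat[OF pp(1) qq(1)] pp qq ent_refl[OF E] by simp
  have "gcat c d E = {r. \<exists>p'\<in>cls E p. \<exists>q'\<in>cls E q. homot E (p'@q') r}"
    unfolding gcat_def using E pp qq by simp
  also have "\<dots> = cls E (p@q)"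
  proof
    show "{r. \<exists>p'\<in>cls E p. \<exists>q'\<in>cls E q. homot E (p'@q') r} \<subseteq> cls E (p@q)"
    proof
      fix r assume "r \<in> {r. \<exists>p'\<in>cls E p. \<exists>q'\<in>cls E q. homot E (p'@q') r}"
      then obtain p' q' where "homot E p p'" "homot E q q'" "homot E (p'@q') r" unfolding cls_def by blast
      then show "r \<in> cls E (p@q)" unfolding cls_def using homot_cat[OF _ _ e] homot_trans by blast
    qed
    show "cls E (p@q) \<subseteq> {r. \<exists>p'\<in>cls E p. \<exists>q'\<in>cls E q. homot E (p'@q') r}"
      using cls_self[OF pp(1)] cls_self[OF qq(1)] unfolding cls_def by blast
  qed
  finally show ?thesis using e by simp
qed

lemma gpath_cat:
  fixes c :: "('a::uniform_space \<times> 'a) set \<Rightarrow> 'a list set"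
  assumes c: "is_gpath x y c" and d: "is_gpath y z d"
  shows "is_gpath x z (gcat c d)"
  unfolding is_gpath_def
proof (intro conjI allI impI)
  fix E :: "('a \<times> 'a) set" assume "\<not> ent E" then show "gcat c d E = {}" unfolding gcat_def by simp
next
  fix E :: "('a \<times> 'a) set" assume E: "ent E"
  obtain p q where p: "p \<in> c E" and q: "q \<in> d E" using gpath_ne[OF c E] gpath_ne[OF d E] by blast
  have pp: "hd p = x" "p \<noteq> []" using gpath_cls[OF c E p] by auto
  have qq: "last q = z" "q \<noteq> []" using gpath_cls[OF d E q] by auto
  show "\<exists>r. epath E r \<and> hd r = x \<and> last r = z \<and> gcat c d E = {s. homot E r s}"
    using gcat_cls[OF c d E p q] pp qq unfolding cls_def by (intro exI[of _ "p@q"]) simp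
next
  fix E F :: "('a \<times> 'a) set" assume E: "ent E" and F: "ent F" and s: "F \<subseteq> E"
  obtain p q where p: "p \<in> c F" and q: "q \<in> d F" using gpath_ne[OF c F] gpath_ne[OF d F] by blast
  have p2: "p \<in> c E" and q2: "q \<in> d E" using gpath_mono[OF c F s] gpath_mono[OF d F s] p q by auto
  show "gcat c d F \<subseteq> gcat c d E"
    using gcat_cls[OF c d F p q] gcat_cls[OF c d E p2 q2] cls_mono[OF s] by simp
qed

definition grev :: "(('a \<times> 'a) set \<Rightarrow> 'a list set) \<Rightarrow> (('a \<times> 'a) set \<Rightarrow> 'a list set)" where
  "grev c = (\<lambda>E. rev ` c E)"

lemma grev_cls:
  assumes c: "is_gpath x y c" and E: "ent E" and p: "p \<in> c E"
  shows "grev c E = cls E (rev p)"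
proof -
  have cE: "c E = cls E p" using gpath_cls[OF c E p] by blast
  show ?thesis unfolding grev_def cE
  proof
    show "rev ` cls E p \<subseteq> cls E (rev p)" unfolding cls_def using homot_rev by blast
    show "cls E (rev p) \<subseteq> rev ` cls E p"
    proof
      fix r assume "r \<in> cls E (rev p)"
      then have "homot E (rev (rev p)) (rev r)" unfolding cls_def using homot_rev by blast
      then have "rev r \<in> cls E p" unfolding cls_def by simp
      then show "r \<in> rev ` cls E p" by (metis image_eqI rev_rev_ident)
    qed
  qed
qed

lemma gpath_rev:
  fixes c :: "('a::uniform_space \<times> 'a) set \<Rightarrow> 'a list set"
  assumes c: "is_gpath x y c"
  shows "is_gpath y x (grev c)"
  unfolding is_gpath_def
proof (intro conjI allI impI)
  fix E :: "('a \<times> 'a) set" assume "\<not> ent E" then show "grev c E = {}" unfolding grev_def using gpath_empty[OF c] by simp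
next
  fix E :: "('a \<times> 'a) set" assume E: "ent E"
  obtain p where p: "p \<in> c E" using gpath_ne[OF c E] by blast
  have pp: "epath E p" "hd p = x" "last p = y" "p \<noteq> []" using gpath_cls[OF c E p] by auto
  show "\<exists>r. epath E r \<and> hd r = y \<and> last r = x \<and> grev c E = {s. homot E r s}"
    using grev_cls[OF c E p] pp epath_rev[of E p] unfolding cls_def
    by (intro exI[of _ "rev p"]) (simp add: hd_rev last_rev)
next
  fix E F :: "('a \<times> 'a) set" assume E: "ent E" and F: "ent F" and s: "F \<subseteq> E"
  show "grev c F \<subseteq> grev c E" unfolding grev_def using gpath_mono[OF c F s] by blast
qed

lemma rev_in_grev: "p \<in> c E \<Longrightarrow> rev p \<in> grev c E"
  unfolding grev_def by blast

lemma gcat_in: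
  assumes c: "is_gpath x y c" and d: "is_gpath y z d" and E: "ent E" and p: "p \<in> c E" and q: "q \<in> d E"
  shows "p@q \<in> gcat c d E"
  using gcat_cls[OF assms] cls_self by blast

lemma map_in:
  assumes g: "generates f" and c: "is_gpath x y c" and F: "ent F" and p: "p \<in> c (pre f F)"
  shows "map f p \<in> gp_map f c F"
proof -
  have "epath (pre f F) p" using gpath_cls[OF c gen_pre[OF g F] p] by blast
  then show ?thesis using map_cls[OF assms] cls_self epath_map by blast
qed


lemma GP_iff: "c \<in> GP x0 \<longleftrightarrow> (\<exists>y. is_gpath x0 y c)"
  unfolding GP_def by simp

lemma gp_hom_refl:
  assumes c: "is_gpath x y c" and G: "ent G" shows "gp_hom G c c"
proof -
  obtain p where p: "p \<in> c G" using gpath_ne[OF c G] by blast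
  have e: "epath G p" using gpath_cls[OF c G p] by blast
  have "ehom G p p" unfolding ehom_def using e ent_refl[OF G] homot_ends[OF e] by blast
  then show ?thesis unfolding gp_hom_def using p by blast
qed

lemma ehom_mono: "ehom G p q \<Longrightarrow> G \<subseteq> G' \<Longrightarrow> ehom G' p q"
  unfolding ehom_def using epath_mono homot_mono by blast

lemma gp_hom_mono:
  assumes c: "is_gpath x y c" and d: "is_gpath x' y' d" and G: "ent G" and s: "G \<subseteq> G'"
    and h: "gp_hom G c d"
  shows "gp_hom G' c d"
proof -
  obtain p q where pq: "p \<in> c G" "q \<in> d G" "ehom G p q" using h unfolding gp_hom_def by blast
  have "p \<in> c G'" "q \<in> d G'" using gpath_mono[OF c G s] gpath_mono[OF d G s] pq by auto
  then show ?thesis unfolding gp_hom_def using ehom_mono[OF pq(3) s] by blast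
qed

lemma ehom_map: "ehom (pre f F) p q \<Longrightarrow> ehom F (map f p) (map f q)"
proof -
  assume h: "ehom (pre f F) p q"
  then have e: "epath (pre f F) p" "epath (pre f F) q" and ne: "p \<noteq> []" "q \<noteq> []"
    unfolding ehom_def by auto
  have hh: "(f (hd p), f (hd q)) \<in> F" "(f (last p), f (last q)) \<in> F"
    using h unfolding ehom_def pre_def by auto
  have "homot F (map f p) (map f (hd p # q @ [last p]))" using h homot_map unfolding ehom_def by blast
  then show ?thesis unfolding ehom_def using epath_map[OF e(1)] epath_map[OF e(2)] hh ne
    by (simp add: hd_map last_map)
qed

lemma gp_hom_eq:
  fixes \<alpha> \<beta> :: "('a::{uniform_space,t2_space} \<times> 'a) set \<Rightarrow> 'a list set"
  assumes a: "is_gpath x0 y1 \<alpha>" and b: "is_gpath x0 y2 \<beta>" and h: "\<And>E. ent E \<Longrightarrow> gp_hom E \<alpha> \<beta>"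
  shows "\<alpha> = \<beta>"
proof -
  have y: "y1 = y2"
  proof (rule ccontr)
    assume "y1 \<noteq> y2"
    then obtain E where E: "ent E" "(y1,y2) \<notin> E" using ent_sep by blast
    obtain p q where pq: "p \<in> \<alpha> E" "q \<in> \<beta> E" "ehom E p q" using h[OF E(1)] unfolding gp_hom_def by blast
    have "last p = y1" "last q = y2" using gpath_cls[OF a E(1) pq(1)] gpath_cls[OF b E(1) pq(2)] by auto
    then show False using pq(3) E(2) unfolding ehom_def by auto
  qed
  show ?thesis
  proof (rule gpath_ext[OF a b])
    fix E :: "('a \<times> 'a) set" assume E: "ent E"
    obtain p q where pq: "p \<in> \<alpha> E" "q \<in> \<beta> E" "ehom E p q" using h[OF E] unfolding gp_hom_def by blast
    have pp: "hd p = x0" "last p = y1" using gpath_cls[OF a E pq(1)] by auto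
    have qq: "epath E q" "hd q = x0" "last q = y2" using gpath_cls[OF b E pq(2)] by auto
    have h1: "homot E p (hd q # q @ [last q])" using pq(3) pp qq y unfolding ehom_def by simp
    have h2: "homot E q (hd q # q @ [last q])" using homot_ends[OF qq(1)] ent_refl[OF E] by blast
    have "homot E p q" using homot_trans[OF h1 homot_sym[OF h2]] .
    then show "\<exists>p\<in>\<alpha> E. \<exists>q\<in>\<beta> E. homot E p q" using pq by blast
  qed
qed

lemma gp_hom_cat:
  assumes \<rho>: "is_gpath x y \<rho>" and a: "is_gpath y z a" and b: "is_gpath y z' b" and G: "ent G"
    and h: "gp_hom G a b"
  shows "gp_hom G (gcat \<rho> a) (gcat \<rho> b)"
proof -
  obtain p q where pq: "p \<in> a G" "q \<in> b G" "ehom G p q" using h unfolding gp_hom_def by blast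
  obtain r where r: "r \<in> \<rho> G" using gpath_ne[OF \<rho> G] by blast
  have pp: "epath G p" "hd p = y" "p \<noteq> []" using gpath_cls[OF a G pq(1)] by auto
  have qq: "epath G q" "hd q = y" "q \<noteq> []" using gpath_cls[OF b G pq(2)] by auto
  have rr: "epath G r" "last r = y" "r \<noteq> []" using gpath_cls[OF \<rho> G r] by auto
  have rp: "r@p \<in> gcat \<rho> a G" "epath G (r@p)" using gcat_in[OF \<rho> a G r pq(1)] gcat_cls[OF \<rho> a G r pq(1)] by auto
  have rq: "r@q \<in> gcat \<rho> b G" "epath G (r@q)" using gcat_in[OF \<rho> b G r pq(2)] gcat_cls[OF \<rho> b G r pq(2)] by auto
  obtain tq where tq: "q = y # tq" using qq by (cases q) auto
  obtain hr tr where hr: "r = hr # tr" using rr by (cases r) auto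
  define lp where "lp = last p"
  have H: "homot G p (y # y # tq @ [lp])" using pq(3) pp tq unfolding ehom_def lp_def by simp
  have A: "homot G (r@p@[]) (r@(y # y # tq @ [lp])@[])" by (rule homot_ctx[OF H]) (use rp in simp)
  have A': "homot G (r@p) (r @ y # y # tq @ [lp])" using A by simp
  have eA: "epath G (r @ y # y # tq @ [lp])" using homot_props[OF A'] by blast
  have B: "homot G (r @ y # y # tq @ [lp]) (r @ y # tq @ [lp])" by (rule homot_undup2[OF eA])
  have eB: "epath G ([] @ hr # (tr @ y # tq @ [lp]))" using homot_props[OF B] hr by simp
  have C: "homot G ([] @ hr # (tr @ y # tq @ [lp])) ([] @ hr # hr # (tr @ y # tq @ [lp]))"
    by (rule homot_dup[OF eB ent_refl[OF G]])
  have C': "homot G (r @ y # tq @ [lp]) (hd (r@p) # (r@q) @ [last (r@p)])"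
    using C hr tq pp unfolding lp_def by simp
  have "homot G (r@p) (hd (r@p) # (r@q) @ [last (r@p)])"
    using homot_trans[OF homot_trans[OF A' B] C'] .
  moreover have "(hd (r@p), hd (r@q)) \<in> G" using rr ent_refl[OF G] by simp
  moreover have "(last (r@p), last (r@q)) \<in> G" using pq(3) pp qq unfolding ehom_def by simp
  ultimately have "ehom G (r@p) (r@q)" unfolding ehom_def using rp rq by blast
  then show ?thesis unfolding gp_hom_def using rp rq by blast
qed

lemma gcancel:
  fixes \<gamma> :: "('a::uniform_space \<times> 'a) set \<Rightarrow> 'a list set"
  assumes \<gamma>: "is_gpath x y \<gamma>" and \<alpha>: "is_gpath y z \<alpha>"
  shows "gcat (grev \<gamma>) (gcat \<gamma> \<alpha>) = \<alpha>"
proof (rule gpath_ext[OF gpath_cat[OF gpath_rev[OF \<gamma>] gpath_cat[OF \<gamma> \<alpha>]] \<alpha>])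
  fix E :: "('a \<times> 'a) set" assume E: "ent E"
  obtain r where r: "r \<in> \<gamma> E" using gpath_ne[OF \<gamma> E] by blast
  obtain p where p: "p \<in> \<alpha> E" using gpath_ne[OF \<alpha> E] by blast
  have rr: "epath E r" "last r = y" using gpath_cls[OF \<gamma> E r] by auto
  have pp: "hd p = y" "p \<noteq> []" using gpath_cls[OF \<alpha> E p] by auto
  have rp: "r@p \<in> gcat \<gamma> \<alpha> E" using gcat_in[OF \<gamma> \<alpha> E r p] .
  have m: "rev r @ (r@p) \<in> gcat (grev \<gamma>) (gcat \<gamma> \<alpha>) E"
    using gcat_in[OF gpath_rev[OF \<gamma>] gpath_cat[OF \<gamma> \<alpha>] E rev_in_grev[of r \<gamma> E, OF r] rp] .
  have e: "epath E (rev r @ (r@p))"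
    using gcat_cls[OF gpath_rev[OF \<gamma>] gpath_cat[OF \<gamma> \<alpha>] E rev_in_grev[of r \<gamma> E, OF r] rp] by blast
  have h1: "homot E (rev r @ r) [last r]" using homot_cancel[OF ent_refl[OF E] rr(1)] .
  have h2: "homot E ([] @ (rev r @ r) @ p) ([] @ [last r] @ p)" by (rule homot_ctx[OF h1]) (use e in simp)
  obtain tp where tp: "p = y # tp" using pp by (cases p) auto
  have h2': "homot E (rev r @ (r@p)) ([] @ y # y # tp)" using h2 rr tp by simp
  have e3: "epath E ([] @ y # y # tp)" using homot_props[OF h2'] by blast
  have h3: "homot E ([] @ y # y # tp) ([] @ y # tp)" by (rule homot_undup2[OF e3])
  have "homot E (rev r @ (r@p)) p" using homot_trans[OF h2' h3] tp by simp
  then show "\<exists>p\<in>gcat (grev \<gamma>) (gcat \<gamma> \<alpha>) E. \<exists>q\<in>\<alpha> E. homot E p q" using m p by blast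
qed

lemma map_cat:
  fixes f :: "'a::uniform_space \<Rightarrow> 'b::uniform_space"
  assumes g: "generates f" and \<gamma>: "is_gpath x y \<gamma>" and \<alpha>: "is_gpath y z \<alpha>"
  shows "gp_map f (gcat \<gamma> \<alpha>) = gcat (gp_map f \<gamma>) (gp_map f \<alpha>)"
proof (rule gpath_ext[OF gpath_map[OF g gpath_cat[OF \<gamma> \<alpha>]] gpath_cat[OF gpath_map[OF g \<gamma>] gpath_map[OF g \<alpha>]]])
  fix F :: "('b \<times> 'b) set" assume F: "ent F"
  have E: "ent (pre f F)" using gen_pre[OF g F] .
  obtain r where r: "r \<in> \<gamma> (pre f F)" using gpath_ne[OF \<gamma> E] by blast
  obtain p where p: "p \<in> \<alpha> (pre f F)" using gpath_ne[OF \<alpha> E] by blast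
  have rp: "r@p \<in> gcat \<gamma> \<alpha> (pre f F)" using gcat_in[OF \<gamma> \<alpha> E r p] .
  have m1: "map f (r@p) \<in> gp_map f (gcat \<gamma> \<alpha>) F" using map_in[OF g gpath_cat[OF \<gamma> \<alpha>] F rp] .
  have m2: "map f r @ map f p \<in> gcat (gp_map f \<gamma>) (gp_map f \<alpha>) F"
    using gcat_in[OF gpath_map[OF g \<gamma>] gpath_map[OF g \<alpha>] F map_in[OF g \<gamma> F r] map_in[OF g \<alpha> F p]] .
  have "epath F (map f (r@p))" using gpath_cls[OF gpath_map[OF g gpath_cat[OF \<gamma> \<alpha>]] F m1] by blast
  then have "homot F (map f (r@p)) (map f r @ map f p)" using homot_refl by simp
  then show "\<exists>p\<in>gp_map f (gcat \<gamma> \<alpha>) F. \<exists>q\<in>gcat (gp_map f \<gamma>) (gp_map f \<alpha>) F. homot F p q"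
    using m1 m2 by blast
qed

lemma map_rev:
  fixes f :: "'a::uniform_space \<Rightarrow> 'b::uniform_space"
  assumes g: "generates f" and \<gamma>: "is_gpath x y \<gamma>"
  shows "gp_map f (grev \<gamma>) = grev (gp_map f \<gamma>)"
proof (rule gpath_ext[OF gpath_map[OF g gpath_rev[OF \<gamma>]] gpath_rev[OF gpath_map[OF g \<gamma>]]])
  fix F :: "('b \<times> 'b) set" assume F: "ent F"
  have E: "ent (pre f F)" using gen_pre[OF g F] .
  obtain r where r: "r \<in> \<gamma> (pre f F)" using gpath_ne[OF \<gamma> E] by blast
  have m1: "map f (rev r) \<in> gp_map f (grev \<gamma>) F" using map_in[OF g gpath_rev[OF \<gamma>] F rev_in_grev[of r \<gamma> "pre f F", OF r]] .
  have m2: "rev (map f r) \<in> grev (gp_map f \<gamma>) F" using rev_in_grev[of "map f r" "gp_map f \<gamma>" F, OF map_in[OF g \<gamma> F r]] .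
  have "epath F (map f (rev r))" using gpath_cls[OF gpath_map[OF g gpath_rev[OF \<gamma>]] F m1] by blast
  then have "homot F (map f (rev r)) (rev (map f r))" using homot_refl by (simp add: rev_map)
  then show "\<exists>p\<in>gp_map f (grev \<gamma>) F. \<exists>q\<in>grev (gp_map f \<gamma>) F. homot F p q" using m1 m2 by blast
qed


lemma part1:
  fixes f :: "'a::{uniform_space,t2_space} \<Rightarrow> 'b::{uniform_space,t2_space}"
  assumes g: "generates f" and G1: "GP1 f" and G2: "GP2 f"
  shows "gp_uequiv (GP x0) (GP (f x0)) (gp_map f)"
proof -
  have img: "gp_map f ` GP x0 \<subseteq> GP (f x0)"
  proof
    fix e assume "e \<in> gp_map f ` GP x0"
    then obtain c y where "e = gp_map f c" "is_gpath x0 y c" using GP_iff by blast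
    then show "e \<in> GP (f x0)" using gpath_map[OF g] GP_iff by blast
  qed
  have uc: "gp_ucont (GP x0) (gp_map f)" unfolding gp_ucont_def
  proof (intro allI impI)
    fix F :: "('b \<times> 'b) set" assume F: "ent F"
    show "\<exists>E. ent E \<and> (\<forall>c\<in>GP x0. \<forall>d\<in>GP x0. gp_hom E c d \<longrightarrow> gp_hom F (gp_map f c) (gp_map f d))"
    proof (intro exI[of _ "pre f F"] conjI ballI impI)
      show "ent (pre f F)" by (rule gen_pre[OF g F])
      fix c d assume c: "c \<in> GP x0" and d: "d \<in> GP x0" and h: "gp_hom (pre f F) c d"
      obtain y1 y2 where cy: "is_gpath x0 y1 c" and dy: "is_gpath x0 y2 d" using c d GP_iff by blast
      obtain p q where pq: "p \<in> c (pre f F)" "q \<in> d (pre f F)" "ehom (pre f F) p q"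
        using h unfolding gp_hom_def by blast
      show "gp_hom F (gp_map f c) (gp_map f d)" unfolding gp_hom_def
        using map_in[OF g cy F pq(1)] map_in[OF g dy F pq(2)] ehom_map[OF pq(3)] by blast
    qed
  qed
  have inj: "c = d" if c: "c \<in> GP x0" and d: "d \<in> GP x0" and e: "gp_map f c = gp_map f d" for c d
  proof -
    obtain y1 y2 where cy: "is_gpath x0 y1 c" and dy: "is_gpath x0 y2 d" using c d GP_iff by blast
    show "c = d"
    proof (rule gp_hom_eq[OF cy dy])
      fix E :: "('a \<times> 'a) set" assume E: "ent E"
      obtain F where F: "ent F" and P: "\<forall>x0. \<forall>\<alpha>\<in>GP x0. \<forall>\<beta>\<in>GP x0.
          gp_hom (pimg f F) (gp_map f \<alpha>) (gp_map f \<beta>) \<longrightarrow> gp_hom E \<alpha> \<beta>"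
        using G2 E unfolding GP2_def by blast
      have "gp_hom (pimg f F) (gp_map f c) (gp_map f d)"
        using gp_hom_refl[OF gpath_map[OF g cy] gen_pimg[OF g F]] e by simp
      then show "gp_hom E c d" using P c d by blast
    qed
  qed
  define h where "h = (\<lambda>d. SOME c. c \<in> GP x0 \<and> gp_map f c = d)"
  have hP: "h d \<in> GP x0 \<and> gp_map f (h d) = d" if d: "d \<in> GP (f x0)" for d
  proof -
    have "\<exists>c. c \<in> GP x0 \<and> gp_map f c = d" using G1 d unfolding GP1_def by blast
    then show ?thesis unfolding h_def by (rule someI_ex)
  qed
  have hg: "h (gp_map f c) = c" if c: "c \<in> GP x0" for c
  proof -
    have gc: "gp_map f c \<in> GP (f x0)" using img c by blast
    show ?thesis using inj[OF conjunct1[OF hP[OF gc]] c conjunct2[OF hP[OF gc]]] .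
  qed
  have huc: "gp_ucont (GP (f x0)) h" unfolding gp_ucont_def
  proof (intro allI impI)
    fix E :: "('a \<times> 'a) set" assume E: "ent E"
    obtain F where F: "ent F" and P: "\<forall>x0. \<forall>\<alpha>\<in>GP x0. \<forall>\<beta>\<in>GP x0.
        gp_hom (pimg f F) (gp_map f \<alpha>) (gp_map f \<beta>) \<longrightarrow> gp_hom E \<alpha> \<beta>"
      using G2 E unfolding GP2_def by blast
    show "\<exists>E'. ent E' \<and> (\<forall>c\<in>GP (f x0). \<forall>d\<in>GP (f x0). gp_hom E' c d \<longrightarrow> gp_hom E (h c) (h d))"
    proof (intro exI[of _ "pimg f F"] conjI ballI impI)
      show "ent (pimg f F)" by (rule gen_pimg[OF g F])
      fix c d assume c: "c \<in> GP (f x0)" and d: "d \<in> GP (f x0)" and hh: "gp_hom (pimg f F) c d"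
      have "gp_hom (pimg f F) (gp_map f (h c)) (gp_map f (h d))" using hh hP[OF c] hP[OF d] by simp
      then show "gp_hom E (h c) (h d)" using P hP[OF c] hP[OF d] by blast
    qed
  qed
  have "h ` GP (f x0) \<subseteq> GP x0" using hP by blast
  then show ?thesis unfolding gp_uequiv_def using img uc huc hP hg by blast
qed

lemma part2:
  fixes f :: "'a::{uniform_space,t2_space} \<Rightarrow> 'b::{uniform_space,t2_space}"
  assumes g: "generates f" and j: "joinable TYPE('a)" and u: "gp_uequiv (GP x1) (GP (f x1)) (gp_map f)"
  shows "GP1 f \<and> GP2 f"
proof -
  obtain h where h1: "h ` GP (f x1) \<subseteq> GP x1" and h2: "\<forall>c\<in>GP x1. h (gp_map f c) = c"
    and h3: "\<forall>d\<in>GP (f x1). gp_map f (h d) = d" and h4: "gp_ucont (GP (f x1)) h"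
    using u unfolding gp_uequiv_def by blast
  have jn: "\<exists>c. is_gpath x y c" for x y :: 'a using j unfolding joinable_def by blast
  have GP1: "GP1 f" unfolding GP1_def
  proof (intro allI ballI)
    fix x0 :: 'a and c assume c: "c \<in> GP (f x0)"
    obtain y where cy: "is_gpath (f x0) y c" using c GP_iff by blast
    obtain \<gamma> where \<gamma>: "is_gpath x1 x0 \<gamma>" using jn by blast
    define c' where "c' = gcat (gp_map f \<gamma>) c"
    have c'p: "is_gpath (f x1) y c'" unfolding c'_def using gpath_cat[OF gpath_map[OF g \<gamma>] cy] .
    then have c'G: "c' \<in> GP (f x1)" using GP_iff by blast
    define d' where "d' = h c'"
    have d'G: "d' \<in> GP x1" using h1 c'G d'_def by blast
    have gd': "gp_map f d' = c'" using h3 c'G d'_def by blast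
    obtain z where d'p: "is_gpath x1 z d'" using d'G GP_iff by blast
    define d where "d = gcat (grev \<gamma>) d'"
    have dp: "is_gpath x0 z d" unfolding d_def using gpath_cat[OF gpath_rev[OF \<gamma>] d'p] .
    have "gp_map f d = gcat (gp_map f (grev \<gamma>)) (gp_map f d')"
      unfolding d_def using map_cat[OF g gpath_rev[OF \<gamma>] d'p] .
    also have "\<dots> = gcat (grev (gp_map f \<gamma>)) (gcat (gp_map f \<gamma>) c)" using map_rev[OF g \<gamma>] gd' c'_def by simp
    also have "\<dots> = c" using gcancel[OF gpath_map[OF g \<gamma>] cy] .
    finally show "\<exists>d\<in>GP x0. gp_map f d = c" using dp GP_iff by blast
  qed
  have GP2: "GP2 f" unfolding GP2_def
  proof (intro allI impI)
    fix E :: "('a \<times> 'a) set" assume E: "ent E"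
    obtain E' where E': "ent E'" and P: "\<forall>c\<in>GP (f x1). \<forall>d\<in>GP (f x1). gp_hom E' c d \<longrightarrow> gp_hom E (h c) (h d)"
      using h4 E unfolding gp_ucont_def by blast
    obtain F where F: "ent F" "pimg f F \<subseteq> E'" using g E' unfolding generates_def by blast
    show "\<exists>F. ent F \<and> (\<forall>x0. \<forall>\<alpha>\<in>GP x0. \<forall>\<beta>\<in>GP x0. gp_hom (pimg f F) (gp_map f \<alpha>) (gp_map f \<beta>) \<longrightarrow> gp_hom E \<alpha> \<beta>)"
    proof (intro exI[of _ F] conjI allI ballI impI)
      show "ent F" by (rule F(1))
      fix x0 :: 'a and \<alpha> \<beta> assume a: "\<alpha> \<in> GP x0" and b: "\<beta> \<in> GP x0"
        and hh: "gp_hom (pimg f F) (gp_map f \<alpha>) (gp_map f \<beta>)"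
      obtain ya yb where ap: "is_gpath x0 ya \<alpha>" and bp: "is_gpath x0 yb \<beta>" using a b GP_iff by blast
      obtain \<gamma> where \<gamma>: "is_gpath x1 x0 \<gamma>" using jn by blast
      define A where "A = gcat \<gamma> \<alpha>"
      define B where "B = gcat \<gamma> \<beta>"
      have Ap: "is_gpath x1 ya A" unfolding A_def using gpath_cat[OF \<gamma> ap] .
      have Bp: "is_gpath x1 yb B" unfolding B_def using gpath_cat[OF \<gamma> bp] .
      have gA: "gp_map f A = gcat (gp_map f \<gamma>) (gp_map f \<alpha>)" unfolding A_def using map_cat[OF g \<gamma> ap] .
      have gB: "gp_map f B = gcat (gp_map f \<gamma>) (gp_map f \<beta>)" unfolding B_def using map_cat[OF g \<gamma> bp] .
      have PF: "ent (pimg f F)" using gen_pimg[OF g F(1)] .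
      have "gp_hom (pimg f F) (gp_map f A) (gp_map f B)"
        using gp_hom_cat[OF gpath_map[OF g \<gamma>] gpath_map[OF g ap] gpath_map[OF g bp] PF hh] gA gB by simp
      then have "gp_hom E' (gp_map f A) (gp_map f B)"
        by (rule gp_hom_mono[OF gpath_map[OF g Ap] gpath_map[OF g Bp] PF F(2)])
      moreover have "gp_map f A \<in> GP (f x1)" "gp_map f B \<in> GP (f x1)"
        using gpath_map[OF g Ap] gpath_map[OF g Bp] GP_iff by blast+
      ultimately have "gp_hom E (h (gp_map f A)) (h (gp_map f B))" using P by blast
      moreover have "h (gp_map f A) = A" "h (gp_map f B) = B" using h2 Ap Bp GP_iff by blast+
      ultimately have hAB: "gp_hom E A B" by simp
      have "gp_hom E (gcat (grev \<gamma>) A) (gcat (grev \<gamma>) B)" using gp_hom_cat[OF gpath_rev[OF \<gamma>] Ap Bp E hAB] .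
      then show "gp_hom E \<alpha> \<beta>" using gcancel[OF \<gamma> ap] gcancel[OF \<gamma> bp] A_def B_def by simp
    qed
  qed
  show ?thesis using GP1 GP2 by blast
qed

theorem mainTheorem12:
  fixes f :: "'a::{uniform_space, t2_space} \<Rightarrow> 'b::{uniform_space, t2_space}"
  assumes "generates f"
  shows "(GP1 f \<and> GP2 f \<longrightarrow> (\<forall>x0. gp_uequiv (GP x0) (GP (f x0)) (gp_map f)))
     \<and> (joinable TYPE('a) \<and> (\<exists>x1. gp_uequiv (GP x1) (GP (f x1)) (gp_map f))
          \<longrightarrow> GP1 f \<and> GP2 f)"
  using part1[OF assms] part2[OF assms] by blast

end
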